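(* Let $d\ge 1$ and $n$ be integers with $n\le d+1$, let $r>0$, let $B\subset\mathbb{R}^d$ be the closed Euclidean ball of radius $r$ centered at the origin, and let $S=\partial B$ be its boundary sphere. Consider the maximization of $E(\mathrm{MST}(X))$ over all point sets $X\subset B$ of cardinality $n$. The maximum is attained when the points of $X$ lie on $S$, at the vertices of a regular $(n-1)$-simplex that has $S$ as its smallest circumscribing sphere.
   Context: For a finite set $Z\subset\mathbb{R}^d$, a spanning tree of $Z$ is a connected acyclic undirected graph with vertex set $Z$; its length is $E(G)=\sum_{(z,z')\text{ edge of }G}\|z-z'\|_2$. $E(\mathrm{MST}(Z))$ denotes the minimum of $E(G)$ over all spanning trees $G$ of $Z$ (the length of a minimum spanning tree). A $k$-simplex is the convex hull of $k+1$ affinely independent points; it is regular if all pairwise distances between its vertices are equal. *)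

theory Defs
  imports "HOL-Analysis.Analysis"
begin

definition graph_edges :: "'a set \<Rightarrow> 'a set set" where
  "graph_edges Z = {{x, y} | x y. x \<in> Z \<and> y \<in> Z \<and> x \<noteq> y}"

definition adj :: "'a set set \<Rightarrow> 'a \<Rightarrow> 'a \<Rightarrow> bool" where
  "adj T x y \<longleftrightarrow> {x, y} \<in> T \<and> x \<noteq> y"

definition graph_connected :: "'a set \<Rightarrow> 'a set set \<Rightarrow> bool" where
  "graph_connected Z T \<longleftrightarrow> (\<forall>x\<in>Z. \<forall>y\<in>Z. (adj T)\<^sup>*\<^sup>* x y)"

definition is_cycle :: "'a set set \<Rightarrow> 'a list \<Rightarrow> bool" where
  "is_cycle T vs \<longleftrightarrow> length vs \<ge> 3 \<and> distinct vs \<and>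
     (\<forall>i. Suc i < length vs \<longrightarrow> adj T (vs ! i) (vs ! Suc i)) \<and>
     adj T (last vs) (hd vs)"

definition graph_acyclic :: "'a set set \<Rightarrow> bool" where
  "graph_acyclic T \<longleftrightarrow> \<not> (\<exists>vs. is_cycle T vs)"

definition spanning_tree :: "'a set \<Rightarrow> 'a set set \<Rightarrow> bool" where
  "spanning_tree Z T \<longleftrightarrow> T \<subseteq> graph_edges Z \<and> graph_connected Z T \<and> graph_acyclic T"

text \<open>Length of a graph: sum of Euclidean lengths of its edges (each unordered edge
  {x,y} appears as the two ordered pairs (x,y),(y,x), hence the factor 1/2).\<close>
definition graph_length :: "'a::real_normed_vector set set \<Rightarrow> real" where
  "graph_length T = (\<Sum>p\<in>{(x, y). {x, y} \<in> T \<and> x \<noteq> y}. norm (fst p - snd p)) / 2"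

definition mst_length :: "'a::real_normed_vector set \<Rightarrow> real" where
  "mst_length Z = Inf (graph_length ` {T. spanning_tree Z T})"

definition regular_simplex_vertices :: "nat \<Rightarrow> 'a::euclidean_space set \<Rightarrow> bool" where
  "regular_simplex_vertices n Y \<longleftrightarrow> finite Y \<and> card Y = n \<and> \<not> affine_dependent Y \<and>
     (\<exists>c. \<forall>x\<in>Y. \<forall>y\<in>Y. x \<noteq> y \<longrightarrow> dist x y = c)"

definition smallest_circumsphere :: "'a::euclidean_space set \<Rightarrow> real \<Rightarrow> bool" where
  "smallest_circumsphere Y r \<longleftrightarrow> Y \<subseteq> sphere 0 r \<and>
     (\<forall>c \<rho>. Y \<subseteq> sphere c \<rho> \<longrightarrow> r \<le> \<rho>)"

end

theory Submission
  imports Defs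
begin


definition star :: "'a \<Rightarrow> 'a set \<Rightarrow> 'a set set" where
  "star x0 X = {{x0, y} | y. y \<in> X \<and> y \<noteq> x0}"

lemma star_edge: "{a, b} \<in> star x0 X \<Longrightarrow> a = x0 \<or> b = x0"
  unfolding star_def by (auto simp: doubleton_eq_iff)

lemma star_spanning:
  assumes "x0 \<in> X"
  shows "spanning_tree X (star x0 X)"
proof -
  have sub: "star x0 X \<subseteq> graph_edges X"
    using assms unfolding star_def graph_edges_def by blast
  have a1: "adj (star x0 X) x0 y" if "y \<in> X" "y \<noteq> x0" for y
    using that unfolding adj_def star_def by auto
  have a2: "adj (star x0 X) y x0" if "y \<in> X" "y \<noteq> x0" for y
    using that unfolding adj_def star_def by (auto simp: insert_commute)
  have r1: "(adj (star x0 X))\<^sup>*\<^sup>* x0 y" if "y \<in> X" for y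
    using a1[OF that] by (cases "y = x0") auto
  have r2: "(adj (star x0 X))\<^sup>*\<^sup>* y x0" if "y \<in> X" for y
    using a2[OF that] by (cases "y = x0") auto
  have conn: "graph_connected X (star x0 X)"
    unfolding graph_connected_def using r1 r2 by (meson rtranclp_trans)
  have acyc: "graph_acyclic (star x0 X)"
    unfolding graph_acyclic_def
  proof
    assume "\<exists>vs. is_cycle (star x0 X) vs"
    then obtain vs where c: "is_cycle (star x0 X) vs" by blast
    have L: "length vs \<ge> 3" and d: "distinct vs"
      and st: "\<And>i. Suc i < length vs \<Longrightarrow> {vs ! i, vs ! Suc i} \<in> star x0 X"
      and lf: "{last vs, hd vs} \<in> star x0 X"
      using c unfolding is_cycle_def adj_def by auto
    have e0: "vs ! 0 = x0 \<or> vs ! 1 = x0" using star_edge[OF st[of 0]] L by simp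
    have e1: "vs ! 1 = x0 \<or> vs ! 2 = x0" using star_edge[OF st[of 1]] L by (auto simp: numeral_2_eq_2)
    have "(vs!0 = vs!1) = (0 = (1::nat))" by (rule nth_eq_iff_index_eq[OF d]) (use L in auto)
    then have n01: "vs ! 0 \<noteq> vs ! 1" by simp
    have "(vs!0 = vs!2) = (0 = (2::nat))" by (rule nth_eq_iff_index_eq[OF d]) (use L in auto)
    then have n02: "vs ! 0 \<noteq> vs ! 2" by simp
    have v1: "vs ! 1 = x0" using e0 e1 n02 by auto
    have "last vs = vs ! (length vs - 1)" using L by (subst last_conv_nth) auto
    moreover have "(vs!(length vs - 1) = vs!1) = (length vs - 1 = (1::nat))" by (rule nth_eq_iff_index_eq[OF d]) (use L in auto)
    then have "vs ! (length vs - 1) \<noteq> vs ! 1" using L by simp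
    moreover have "hd vs = vs ! 0" using L by (subst hd_conv_nth) auto
    ultimately show False using star_edge[OF lf] v1 n01 by auto
  qed
  show ?thesis unfolding spanning_tree_def using sub conn acyc by blast
qed

lemma star_length:
  fixes X :: "'a::real_normed_vector set"
  assumes "finite X" "x0 \<in> X"
  shows "graph_length (star x0 X) = (\<Sum>y\<in>X. norm (x0 - y))"
proof -
  let ?A = "(\<lambda>y. (x0, y)) ` (X - {x0})" and ?B = "(\<lambda>y. (y, x0)) ` (X - {x0})"
  have P: "{(x, y). {x, y} \<in> star x0 X \<and> x \<noteq> y} = ?A \<union> ?B"
    unfolding star_def by (auto simp: doubleton_eq_iff)
  have "(\<Sum>p\<in>?A \<union> ?B. norm (fst p - snd p)) = (\<Sum>p\<in>?A. norm (fst p - snd p)) + (\<Sum>p\<in>?B. norm (fst p - snd p))"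
    using assms by (intro sum.union_disjoint) auto
  also have "(\<Sum>p\<in>?A. norm (fst p - snd p)) = (\<Sum>y\<in>X - {x0}. norm (x0 - y))"
    by (subst sum.reindex) (auto simp: inj_on_def)
  also have "(\<Sum>p\<in>?B. norm (fst p - snd p)) = (\<Sum>y\<in>X - {x0}. norm (x0 - y))"
    by (subst sum.reindex) (auto simp: inj_on_def norm_minus_commute)
  also have "(\<Sum>y\<in>X - {x0}. norm (x0 - y)) = (\<Sum>y\<in>X. norm (x0 - y))"
    using assms by (intro sum.mono_neutral_left) auto
  finally show ?thesis unfolding graph_length_def P by simp
qed

lemma graph_length_nonneg: "graph_length T \<ge> 0"
  unfolding graph_length_def by (simp add: sum_nonneg)

lemma edge_in:
  assumes "T \<subseteq> graph_edges Y" "{a, b} \<in> T"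
  shows "a \<in> Y \<and> b \<in> Y"
  using assms unfolding graph_edges_def by (auto simp: doubleton_eq_iff)

lemma tree_lower:
  fixes Y :: "'a::real_normed_vector set"
  assumes fin: "finite Y" and y0: "y0 \<in> Y" and st: "spanning_tree Y T"
    and cst: "\<And>x y. x \<in> Y \<Longrightarrow> y \<in> Y \<Longrightarrow> x \<noteq> y \<Longrightarrow> norm (x - y) = c"
  shows "graph_length T \<ge> c * (real (card Y) - 1)"
proof -
  have sub: "T \<subseteq> graph_edges Y" and conn: "\<And>x y. x \<in> Y \<Longrightarrow> y \<in> Y \<Longrightarrow> (adj T)\<^sup>*\<^sup>* x y"
    using st unfolding spanning_tree_def graph_connected_def by auto
  define k where "k y = (LEAST k. (adj T ^^ k) y0 y)" for y
  have kex: "(adj T ^^ k y) y0 y" if "y \<in> Y" for y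
    unfolding k_def using conn[OF y0 that] by (metis LeastI rtranclp_power)
  have par: "\<exists>z. adj T z y \<and> k z < k y" if "y \<in> Y" "y \<noteq> y0" for y
  proof -
    have "k y \<noteq> 0" using kex[OF that(1)] that(2) by (metis relpowp.simps(1) eq_id_iff) 
    then obtain j where j: "k y = Suc j" by (cases "k y") auto
    have "(adj T ^^ Suc j) y0 y" using kex[OF that(1)] j by simp
    then obtain z where z: "(adj T ^^ j) y0 z" "adj T z y" by (rule relpowp_Suc_E)
    have "k z \<le> j" unfolding k_def using z(1) by (rule Least_le)
    then show ?thesis using z j by auto
  qed
  define p where "p y = (SOME z. adj T z y \<and> k z < k y)" for y
  have pp: "adj T (p y) y \<and> k (p y) < k y" if "y \<in> Y - {y0}" for y
    unfolding p_def using par that by (metis (mono_tags, lifting) DiffE insertCI someI_ex)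
  let ?P = "{(x, y). {x, y} \<in> T \<and> x \<noteq> y}"
  let ?A = "(\<lambda>y. (y, p y)) ` (Y - {y0})" and ?B = "(\<lambda>y. (p y, y)) ` (Y - {y0})"
  have PY: "?P \<subseteq> Y \<times> Y" using edge_in[OF sub] by auto
  have finP: "finite ?P" using PY fin by (meson finite_SigmaI rev_finite_subset)
  have AB: "?A \<union> ?B \<subseteq> ?P"
  proof
    fix q assume "q \<in> ?A \<union> ?B"
    then obtain y where y: "y \<in> Y - {y0}" "q = (y, p y) \<or> q = (p y, y)" by auto
    have "{p y, y} \<in> T" "p y \<noteq> y" using pp[OF y(1)] unfolding adj_def by auto
    then show "q \<in> ?P" using y(2) by (auto simp: insert_commute)
  qed
  have dis: "?A \<inter> ?B = {}"
  proof (rule ccontr)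
    assume "?A \<inter> ?B \<noteq> {}"
    then obtain y y' where "y \<in> Y - {y0}" "y' \<in> Y - {y0}" "y = p y'" "p y = y'" by auto
    then show False using pp by (metis less_asym)
  qed
  have cA: "card ?A = card Y - 1" using y0 fin by (subst card_image) (auto simp: inj_on_def)
  have cB: "card ?B = card Y - 1" using y0 fin by (subst card_image) (auto simp: inj_on_def)
  have le2: "2 * (card Y - 1) \<le> card ?P"
  proof -
    have "card (?A \<union> ?B) = card ?A + card ?B" using dis fin by (intro card_Un_disjoint) auto
    moreover have "card (?A \<union> ?B) \<le> card ?P" using AB finP by (rule card_mono[rotated])
    ultimately show ?thesis using cA cB by simp
  qed
  have "(\<Sum>q\<in>?P. norm (fst q - snd q)) = c * card ?P"
  proof -
    have "(\<Sum>q\<in>?P. norm (fst q - snd q)) = (\<Sum>q\<in>?P. c)"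
      using PY by (intro sum.cong) (auto intro!: cst)
    then show ?thesis by simp
  qed
  have c0: "c \<ge> 0" if nc: "\<not> card Y \<le> Suc 0"
  proof -
    obtain a b where "a \<in> Y" "b \<in> Y" "a \<noteq> b"
      using nc card_le_Suc0_iff_eq[OF fin] by blast
    then show ?thesis using cst by (metis norm_ge_zero)
  qed
  have "card Y \<ge> 1" using fin y0 by (metis One_nat_def Suc_leI card_gt_0_iff empty_iff)
  show ?thesis
  proof (cases "card Y \<le> Suc 0")
    case True
    then have "real (card Y) - 1 = 0" using \<open>card Y \<ge> 1\<close> by simp
    then show ?thesis using graph_length_nonneg[of T] unfolding graph_length_def by simp
  next
    case False
    have "c * (real (card Y) - 1) * 2 \<le> c * card ?P"
    proof -
      have "real (2 * (card Y - 1)) \<le> real (card ?P)" using le2 by (rule of_nat_mono)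
      then have "(real (card Y) - 1) * 2 \<le> real (card ?P)" using \<open>card Y \<ge> 1\<close> by (simp add: of_nat_diff)
      from mult_left_mono[OF this c0[OF False]] show ?thesis by (simp add: mult.assoc)
    qed
    then show ?thesis using \<open>(\<Sum>q\<in>?P. norm (fst q - snd q)) = c * card ?P\<close> unfolding graph_length_def by simp
  qed
qed



lemma sum_if_eq:
  assumes "finite Y" "y \<in> Y"
  shows "(\<Sum>y'\<in>Y. if y = y' then R else a) = R + (real (card Y) - 1) * (a::real)"
proof -
  have "(\<Sum>y'\<in>Y. if y = y' then R else a) = (\<Sum>y'\<in>Y. (if y = y' then R - a else 0) + a)"
    by (intro sum.cong) auto
  also have "\<dots> = (R - a) + real (card Y) * a"
    using assms by (simp add: sum.distrib)
  finally show ?thesis by (simp add: algebra_simps)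
qed

lemma norm_diff_sq:
  fixes x y :: "'a::real_inner"
  shows "(norm (x - y))\<^sup>2 = (norm x)\<^sup>2 + (norm y)\<^sup>2 - 2 * inner x y"
  by (simp add: power2_norm_eq_inner inner_diff inner_commute algebra_simps)

lemma star_bound:
  fixes X :: "'a::real_inner set"
  assumes fin: "finite X" and ne: "X \<noteq> {}" and sub: "X \<subseteq> cball 0 r"
  shows "\<exists>x0\<in>X. (\<Sum>y\<in>X. norm (x0 - y))\<^sup>2 \<le> 2 * real (card X) * (real (card X) - 1) * r\<^sup>2"
proof -
  define n where "n = real (card X)"
  have npos: "n > 0" using fin ne unfolding n_def by (simp add: card_gt_0_iff)
  define F where "F x = (\<Sum>y\<in>X. norm (x - y))" for x
  have "Min (F ` X) \<in> F ` X" using fin ne by (intro Min_in) auto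
  then obtain x0 where x0X: "x0 \<in> X" and x0M: "F x0 = Min (F ` X)" by auto
  have x0: "x0 \<in> X" "\<And>x. x \<in> X \<Longrightarrow> F x0 \<le> F x"
    using x0X x0M fin by auto
  have F0: "F x0 \<ge> 0" unfolding F_def by (simp add: sum_nonneg)
  have "n * F x0 = (\<Sum>x\<in>X. F x0)" unfolding n_def by simp
  also have "\<dots> \<le> (\<Sum>x\<in>X. F x)" by (intro sum_mono x0(2))
  finally have nF: "n * F x0 \<le> (\<Sum>x\<in>X. F x)" .
  define d where "d p = norm (fst p - snd p)" for p :: "'a \<times> 'a"
  define w where "w p = (if fst p = snd p then 0 else (1::real))" for p :: "'a \<times> 'a"
  have S: "(\<Sum>x\<in>X. F x) = (\<Sum>p\<in>X \<times> X. d p * w p)"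
  proof -
    have "(\<Sum>x\<in>X. F x) = (\<Sum>p\<in>X \<times> X. d p)"
      unfolding F_def d_def by (simp add: sum.cartesian_product case_prod_beta)
    also have "\<dots> = (\<Sum>p\<in>X \<times> X. d p * w p)"
      by (intro sum.cong) (auto simp: d_def w_def)
    finally show ?thesis .
  qed
  have W: "(\<Sum>p\<in>X \<times> X. (w p)\<^sup>2) = n * (n - 1)"
  proof -
    have "(\<Sum>p\<in>X \<times> X. (w p)\<^sup>2) = (\<Sum>x\<in>X. \<Sum>y\<in>X. if x = y then 0 else 1)"
    proof -
      have "(\<Sum>p\<in>X \<times> X. (w p)\<^sup>2) = (\<Sum>p\<in>X \<times> X. if fst p = snd p then 0 else 1)"
        unfolding w_def by (intro sum.cong) auto
      then show ?thesis by (simp add: sum.cartesian_product case_prod_beta)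
    qed
    also have "\<dots> = (\<Sum>x\<in>X. 0 + (n - 1) * 1)"
      using fin unfolding n_def by (intro sum.cong refl sum_if_eq) auto
    finally show ?thesis unfolding n_def by simp
  qed
  have D: "(\<Sum>p\<in>X \<times> X. (d p)\<^sup>2) \<le> 2 * n * n * r\<^sup>2"
  proof -
    have "(\<Sum>p\<in>X \<times> X. (d p)\<^sup>2) = (\<Sum>x\<in>X. \<Sum>y\<in>X. (norm x)\<^sup>2 + (norm y)\<^sup>2 - 2 * inner x y)"
      unfolding d_def by (simp add: sum.cartesian_product norm_diff_sq case_prod_beta)
    also have "\<dots> = 2 * n * (\<Sum>x\<in>X. (norm x)\<^sup>2) - 2 * inner (\<Sum>X) (\<Sum>X)"
      unfolding n_def
      by (simp add: sum.distrib sum_subtractf inner_sum_left inner_sum_right sum_distrib_left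
          sum_distrib_right algebra_simps inner_commute)
    also have "\<dots> \<le> 2 * n * (\<Sum>x\<in>X. r\<^sup>2)"
    proof -
      have "(\<Sum>x\<in>X. (norm x)\<^sup>2) \<le> (\<Sum>x\<in>X. r\<^sup>2)"
      proof (intro sum_mono)
        fix x assume "x \<in> X"
        then have "norm x \<le> r" using sub by auto
        then show "(norm x)\<^sup>2 \<le> r\<^sup>2" by (intro power_mono) auto
      qed
      then show ?thesis using npos by (smt (verit) inner_ge_zero mult_left_mono)
    qed
    also have "\<dots> = 2 * n * n * r\<^sup>2" unfolding n_def by simp
    finally show ?thesis .
  qed
  have "(\<Sum>x\<in>X. F x)\<^sup>2 \<le> (2 * n * n * r\<^sup>2) * (n * (n - 1))"
    unfolding S using Cauchy_Schwarz_ineq_sum[of d w "X \<times> X"] D W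
    by (smt (verit) mult_right_mono npos mult_nonneg_nonneg W sum_nonneg zero_le_power2)
  moreover have "(n * F x0)\<^sup>2 \<le> (\<Sum>x\<in>X. F x)\<^sup>2"
    using nF npos F0 by (intro power_mono) auto
  ultimately have "n\<^sup>2 * (F x0)\<^sup>2 \<le> n\<^sup>2 * (2 * n * (n - 1) * r\<^sup>2)"
    by (simp add: power_mult_distrib power2_eq_square algebra_simps)
  then have "(F x0)\<^sup>2 \<le> 2 * n * (n - 1) * r\<^sup>2" using npos by simp
  then show ?thesis using x0 unfolding F_def n_def by blast
qed



lemma given_simplex:
  fixes Y :: "'a::euclidean_space set"
  assumes fin: "finite Y" and cardY: "card Y = n" and n2: "2 \<le> n"
    and sph: "Y \<subseteq> sphere 0 r"
    and cst: "\<And>x y. x \<in> Y \<Longrightarrow> y \<in> Y \<Longrightarrow> x \<noteq> y \<Longrightarrow> dist x y = c"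
    and small: "\<And>c' \<rho>. Y \<subseteq> sphere c' \<rho> \<Longrightarrow> r \<le> \<rho>"
  shows "(real n - 1) * c\<^sup>2 = 2 * real n * r\<^sup>2 \<and> c \<ge> 0"
proof -
  have "\<not> card Y \<le> Suc 0" using n2 cardY by simp
  then obtain a0 b0 where ab: "a0 \<in> Y" "b0 \<in> Y" "a0 \<noteq> b0"
    using card_le_Suc0_iff_eq[OF fin] by blast
  have c0: "c \<ge> 0" using cst[OF ab] by (metis zero_le_dist)
  have nY: "\<And>y. y \<in> Y \<Longrightarrow> norm y = r" using sph by auto
  define a where "a = r\<^sup>2 - c\<^sup>2 / 2"
  have inn: "inner y y' = (if y = y' then r\<^sup>2 else a)" if "y \<in> Y" "y' \<in> Y" for y y'
  proof (cases "y = y'")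
    case True then show ?thesis using nY[OF that(1)] by (simp flip: power2_norm_eq_inner)
  next
    case False
    have "c\<^sup>2 = (norm (y - y'))\<^sup>2" using cst[OF that False] by (simp add: dist_norm)
    also have "\<dots> = 2 * r\<^sup>2 - 2 * inner y y'" using nY that by (simp add: norm_diff_sq)
    finally show ?thesis using False unfolding a_def by (simp add: field_simps)
  qed
  define s where "s = \<Sum>Y"
  define K where "K = r\<^sup>2 + (real n - 1) * a"
  have iys: "inner y s = K" if "y \<in> Y" for y
  proof -
    have "inner y s = (\<Sum>y'\<in>Y. if y = y' then r\<^sup>2 else a)"
      unfolding s_def inner_sum_right using inn that by (intro sum.cong) auto
    then show ?thesis using sum_if_eq[OF fin that] cardY unfolding K_def by simp
  qed
  have iss: "inner s s = real n * K"
  proof -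
    have "inner s s = (\<Sum>y\<in>Y. inner y s)" unfolding s_def by (simp add: inner_sum_left)
    also have "\<dots> = (\<Sum>y\<in>Y. K)" using iys by simp
    finally show ?thesis using cardY by simp
  qed
  have npos: "real n > 0" using n2 by simp
  have Kge: "K \<ge> 0" using iss npos by (metis inner_ge_zero zero_le_mult_iff not_less)
  define m where "m = (1 / real n) *\<^sub>R s"
  have dm: "(norm (y - m))\<^sup>2 = r\<^sup>2 - K / real n" if "y \<in> Y" for y
  proof -
    have "(norm (y - m))\<^sup>2 = inner y y - 2 * inner y m + inner m m"
      by (simp add: power2_norm_eq_inner inner_diff inner_commute)
    also have "\<dots> = r\<^sup>2 - 2 * (K / real n) + (real n * K) / (real n)\<^sup>2"
      using inn[OF that that] iys[OF that] iss unfolding m_def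
      by (simp add: power2_eq_square)
    also have "\<dots> = r\<^sup>2 - K / real n" using npos by (simp add: power2_eq_square field_simps)
    finally show ?thesis .
  qed
  have "Y \<subseteq> sphere m (sqrt (r\<^sup>2 - K / real n))"
  proof
    fix y assume "y \<in> Y"
    then have "dist m y = sqrt ((norm (y - m))\<^sup>2)" by (simp add: dist_norm norm_minus_commute)
    then show "y \<in> sphere m (sqrt (r\<^sup>2 - K / real n))" using dm[OF \<open>y \<in> Y\<close>] by simp
  qed
  then have "r \<le> sqrt (r\<^sup>2 - K / real n)" by (rule small)
  moreover have "r \<ge> 0" using nY[OF ab(1)] by (metis norm_ge_zero)
  ultimately have "r\<^sup>2 \<le> r\<^sup>2 - K / real n"
    by (metis dm[OF ab(1)] real_sqrt_le_iff real_sqrt_unique zero_le_power2 power_mono)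
  then have "K / real n \<le> 0" by simp
  then have "K = 0" using Kge npos by (simp add: divide_le_0_iff)
  then show ?thesis using c0 unfolding K_def a_def by (simp add: algebra_simps)
qed



lemma simplex_from_inner:
  fixes Y :: "'a::euclidean_space set"
  assumes fin: "finite Y" and cardY: "card Y = n" and n2: "2 \<le> n" and r: "r > 0"
    and inn: "\<And>y y'. y \<in> Y \<Longrightarrow> y' \<in> Y \<Longrightarrow> inner y y' = (if y = y' then r\<^sup>2 else - r\<^sup>2 / (real n - 1))"
  shows "regular_simplex_vertices n Y \<and> smallest_circumsphere Y r"
proof -
  define a where "a = - r\<^sup>2 / (real n - 1)"
  have n1: "real n - 1 > 0" using n2 by simp
  have aneg: "a < 0" unfolding a_def using n1 r by (simp add: divide_neg_pos)
  have ra: "r\<^sup>2 - a > 0" using aneg r by (smt (verit) zero_le_power2)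
  have nY: "norm y = r" if "y \<in> Y" for y
    using inn[OF that that] r by (metis power2_norm_eq_inner norm_ge_zero power2_eq_imp_eq less_imp_le)
  have dists: "dist y y' = sqrt (2 * r\<^sup>2 - 2 * a)" if "y \<in> Y" "y' \<in> Y" "y \<noteq> y'" for y y'
  proof -
    have "(norm (y - y'))\<^sup>2 = 2 * r\<^sup>2 - 2 * a"
      using norm_diff_sq[of y y'] nY[OF that(1)] nY[OF that(2)] inn[OF that(1,2)] that(3)
      unfolding a_def by simp
    then show ?thesis by (simp add: dist_norm flip: \<open>(norm (y - y'))\<^sup>2 = _\<close>)
  qed
  have indep: "\<not> affine_dependent Y"
  proof
    assume "affine_dependent Y"
    then obtain U where U: "sum U Y = 0" "\<exists>v\<in>Y. U v \<noteq> 0" "(\<Sum>v\<in>Y. U v *\<^sub>R v) = 0"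
      using affine_dependent_explicit_finite[OF fin] by blast
    then obtain v where v: "v \<in> Y" "U v \<noteq> 0" by blast
    have "0 = inner v (\<Sum>w\<in>Y. U w *\<^sub>R w)" using U(3) by simp
    also have "\<dots> = (\<Sum>w\<in>Y. U w * (if v = w then r\<^sup>2 else a))"
      unfolding inner_sum_right using inn v(1) unfolding a_def by (intro sum.cong) auto
    also have "\<dots> = (\<Sum>w\<in>Y. (if v = w then U w * (r\<^sup>2 - a) else 0) + U w * a)"
      by (intro sum.cong) (auto simp: algebra_simps)
    also have "\<dots> = U v * (r\<^sup>2 - a) + sum U Y * a"
      using fin v(1) by (simp add: sum.distrib sum_distrib_right)
    finally have "U v * (r\<^sup>2 - a) = 0" using U(1) by simp
    then show False using v(2) ra by simp
  qed
  have reg: "regular_simplex_vertices n Y"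
    unfolding regular_simplex_vertices_def using fin cardY indep dists by blast
  define s where "s = \<Sum>Y"
  have s0: "s = 0"
  proof -
    have iys: "inner y s = 0" if "y \<in> Y" for y
    proof -
      have "inner y s = (\<Sum>y'\<in>Y. if y = y' then r\<^sup>2 else a)"
        unfolding s_def inner_sum_right using inn that unfolding a_def by (intro sum.cong) auto
      also have "\<dots> = r\<^sup>2 + (real n - 1) * a" using sum_if_eq[OF fin that] cardY by simp
      also have "\<dots> = 0" unfolding a_def using n1 by simp
      finally show ?thesis .
    qed
    have "inner s s = (\<Sum>y\<in>Y. inner y s)" unfolding s_def by (simp add: inner_sum_left)
    also have "\<dots> = 0" using iys by simp
    finally show ?thesis by simp
  qed
  have npos: "real n > 0" using n2 by simp
  have "Y \<noteq> {}" using cardY n2 by auto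
  then obtain y1 where y1: "y1 \<in> Y" by auto
  have small: "r \<le> \<rho>" if "Y \<subseteq> sphere c \<rho>" for c \<rho>
  proof -
    have dy: "(norm (y - c))\<^sup>2 = \<rho>\<^sup>2" if "y \<in> Y" for y
      using \<open>Y \<subseteq> sphere c \<rho>\<close> that by (auto simp: dist_norm norm_minus_commute)
    have "real n * \<rho>\<^sup>2 = (\<Sum>y\<in>Y. (norm (y - c))\<^sup>2)" using dy cardY by simp
    also have "\<dots> = (\<Sum>y\<in>Y. r\<^sup>2 + (norm c)\<^sup>2 - 2 * inner y c)"
      using nY by (intro sum.cong) (auto simp: norm_diff_sq)
    also have "\<dots> = real n * (r\<^sup>2 + (norm c)\<^sup>2) - 2 * inner s c"
      unfolding s_def using cardY by (simp add: sum_subtractf inner_sum_left sum_distrib_left)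
    also have "\<dots> \<ge> real n * r\<^sup>2" using s0 npos by (simp add: algebra_simps)
    finally have "r\<^sup>2 \<le> \<rho>\<^sup>2" using npos by simp
    moreover have "\<rho> \<ge> 0" using \<open>Y \<subseteq> sphere c \<rho>\<close> y1 by (metis in_mono mem_sphere zero_le_dist)
    ultimately show ?thesis using power2_le_imp_le by blast
  qed
  have "smallest_circumsphere Y r"
    unfolding smallest_circumsphere_def using nY small by auto
  then show ?thesis using reg by blast
qed



lemma exists_inner_config:
  assumes n2: "2 \<le> n" and nd: "n \<le> DIM('a::euclidean_space) + 1" and r: "r > 0"
  shows "\<exists>Y::'a set. finite Y \<and> card Y = n \<and>
    (\<forall>y\<in>Y. \<forall>y'\<in>Y. inner y y' = (if y = y' then r\<^sup>2 else - r\<^sup>2 / (real n - 1)))"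
proof -
  define m where "m = n - 1"
  have m1: "m \<ge> 1" and mn: "real n = real m + 1" using n2 unfolding m_def by auto
  have "card {..<m} \<le> card (Basis :: 'a set)" using nd unfolding m_def by simp
  then obtain e :: "nat \<Rightarrow> 'a" where e: "e ` {..<m} \<subseteq> Basis" "inj_on e {..<m}"
    using card_le_inj[of "{..<m}" "Basis :: 'a set"] by auto
  have ee: "inner (e i) (e j) = (if i = j then 1 else 0)" if "i < m" "j < m" for i j
  proof -
    have b: "e i \<in> Basis" "e j \<in> Basis" using e that by auto
    have "e i = e j \<longleftrightarrow> i = j" using e(2) that by (auto simp: inj_on_def)
    then show ?thesis using inner_Basis[OF b] by simp
  qed
  define u where "u = (\<Sum>k<m. e k)"
  have eu: "inner (e i) u = 1" if "i < m" for i
  proof -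
    have "inner (e i) u = (\<Sum>k<m. if i = k then 1 else 0)"
      unfolding u_def inner_sum_right using ee that by (intro sum.cong) auto
    then show ?thesis using that by simp
  qed
  have uu: "inner u u = real m"
  proof -
    have "inner u u = (\<Sum>k<m. inner (e k) u)" unfolding u_def[of] by (simp add: inner_sum_left u_def)
    then show ?thesis using eu by simp
  qed
  define q where "q = sqrt (real n)"
  have q2: "q\<^sup>2 = real m + 1" unfolding q_def using mn by simp
  have q1: "q > 1" unfolding q_def using n2 by simp
  define \<beta> where "\<beta> = 1 / (q * (q + 1))"
  define \<gamma> where "\<gamma> = - 1 / q"
  define s where "s = r * q / sqrt (real m)"
  have s2: "s\<^sup>2 = r\<^sup>2 * q\<^sup>2 / real m" unfolding s_def using m1 by (simp add: power_mult_distrib power_divide)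
  have bm: "\<beta> * real m = (q - 1) / q"
  proof -
    have meq: "real m = (q - 1) * (q + 1)" using q2 by (simp add: algebra_simps power2_eq_square)
    have "\<beta> * real m = real m / (q * (q + 1))" unfolding \<beta>_def by simp
    also have "\<dots> = (q - 1) * (q + 1) / (q * (q + 1))" by (simp only: meq)
    also have "\<dots> = (q - 1) / q" using q1 by (intro mult_divide_mult_cancel_right) simp
    finally show ?thesis .
  qed
  have qn0: "q \<noteq> 0" "q + 1 \<noteq> 0" "q + q * q \<noteq> 0" "q * q + q * (q * q) \<noteq> 0" "q * (q + 1) \<noteq> 0"
  proof -
    have "q > 0" using q1 by simp
    then have "q + 1 > 0" "q + q * q > 0" "q * q + q * (q * q) > 0" "q * (q + 1) > 0" by (auto intro!: add_pos_pos mult_pos_pos)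
    then show "q \<noteq> 0" "q + 1 \<noteq> 0" "q + q * q \<noteq> 0" "q * q + q * (q * q) \<noteq> 0" "q * (q + 1) \<noteq> 0"
      using \<open>q > 0\<close> by auto
  qed
  have H1: "- 2 * \<beta> + \<beta> * (\<beta> * real m) = - 1 / q\<^sup>2"
  proof -
    have "- 2 * \<beta> + \<beta> * (\<beta> * real m) = \<beta> * ((q - 1) / q - 2)" unfolding bm by (simp add: algebra_simps)
    also have "(q - 1) / q - 2 = - (q + 1) / q" using qn0 by (simp add: field_simps)
    also have "\<beta> * (- (q + 1) / q) = - 1 / (q * q)" unfolding \<beta>_def using qn0 by (simp add: field_simps)
    finally show ?thesis by (simp add: power2_eq_square)
  qed
  have H2: "s\<^sup>2 / q\<^sup>2 = r\<^sup>2 / real m" unfolding s2 using qn0 by (simp add: field_simps)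
  have H3: "s\<^sup>2 * (1 - 1 / q\<^sup>2) = r\<^sup>2"
  proof -
    have "s\<^sup>2 * (1 - 1 / q\<^sup>2) = s\<^sup>2 - s\<^sup>2 / q\<^sup>2" by (simp add: algebra_simps)
    also have "\<dots> = r\<^sup>2 * (q\<^sup>2 - 1) / real m" unfolding H2 s2 using m1 qn0(1) by (simp add: field_simps)
    also have "\<dots> = r\<^sup>2" using q2 mn m1 by simp
    finally show ?thesis .
  qed
  have b1: "1 - \<beta> * real m = 1 / q" unfolding bm using qn0 by (simp add: field_simps)
  define f where "f i = (if i < m then s *\<^sub>R (e i - \<beta> *\<^sub>R u) else (s * \<gamma>) *\<^sub>R u)" for i
  have mpos: "real m > 0" using m1 by simp
  have I: "inner (f i) (f j) = (if i = j then r\<^sup>2 else - r\<^sup>2 / real m)" if "i \<le> m" "j \<le> m" for i j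
  proof (cases "i < m")
    case True
    note i = True
    show ?thesis
    proof (cases "j < m")
      case True
      have "inner (f i) (f j) = s\<^sup>2 * ((if i = j then 1 else 0) + (- 2 * \<beta> + \<beta> * (\<beta> * real m)))"
        unfolding f_def using i True ee[OF i True] eu[OF i] eu[OF True] uu
        by (simp add: inner_diff inner_commute power2_eq_square algebra_simps)
      also have "\<dots> = (if i = j then r\<^sup>2 else - r\<^sup>2 / real m)"
      proof -
        have a1: "s\<^sup>2 * (1 + - 1 / q\<^sup>2) = r\<^sup>2" using H3 by simp
        have a2: "s\<^sup>2 * (0 + - 1 / q\<^sup>2) = - r\<^sup>2 / real m"
        proof -
          have "s\<^sup>2 * (0 + - 1 / q\<^sup>2) = - (s\<^sup>2 / q\<^sup>2)" by simp
          then show ?thesis unfolding H2 by simp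
        qed
        show ?thesis
        proof (cases "i = j")
          case True show ?thesis unfolding H1 if_P[OF True] by (rule a1)
        next
          case False show ?thesis unfolding H1 if_not_P[OF False] by (rule a2)
        qed
      qed
      finally show ?thesis .
    next
      case False
      then have j: "j = m" using that by simp
      have "inner (f i) (f j) = s\<^sup>2 * \<gamma> * (1 - \<beta> * real m)"
        unfolding f_def using i j eu[OF i] uu
        by (simp add: inner_diff inner_commute power2_eq_square algebra_simps)
      also have "\<dots> = - (s\<^sup>2 / q\<^sup>2)" unfolding b1 \<gamma>_def by (simp add: power2_eq_square)
      also have "\<dots> = - r\<^sup>2 / real m" unfolding H2 by simp
      finally show ?thesis using i j by simp
    qed
  next
    case False
    then have i: "i = m" using that by simp
    show ?thesis
    proof (cases "j < m")
      case True
      have "inner (f i) (f j) = s\<^sup>2 * \<gamma> * (1 - \<beta> * real m)"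
        unfolding f_def using i True eu[OF True] uu
        by (simp add: inner_diff inner_commute power2_eq_square algebra_simps)
      also have "\<dots> = - (s\<^sup>2 / q\<^sup>2)" unfolding b1 \<gamma>_def by (simp add: power2_eq_square)
      also have "\<dots> = - r\<^sup>2 / real m" unfolding H2 by simp
      finally show ?thesis using i True by simp
    next
      case False
      then have j: "j = m" using that by simp
      have "inner (f i) (f j) = s\<^sup>2 * \<gamma>\<^sup>2 * real m"
        unfolding f_def using i j uu by (simp add: power2_eq_square algebra_simps)
      also have "\<dots> = (s\<^sup>2 / q\<^sup>2) * real m"
        unfolding \<gamma>_def by (simp add: power_divide)
      also have "\<dots> = r\<^sup>2" unfolding H2 using mpos by simp
      finally show ?thesis using i j by simp
    qed
  qed
  have rm: "r\<^sup>2 \<noteq> - r\<^sup>2 / real m"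
  proof -
    have "r\<^sup>2 > 0" using r by simp
    moreover have "r\<^sup>2 / real m > 0" using r mpos by simp
    ultimately show ?thesis by linarith
  qed
  have inj: "inj_on f {..m}"
  proof (rule inj_onI)
    fix i j assume ij: "i \<in> {..m}" "j \<in> {..m}" "f i = f j"
    show "i = j"
    proof (rule ccontr)
      assume "i \<noteq> j"
      have "i \<le> m" "j \<le> m" using ij by auto
      from I[OF this] \<open>i \<noteq> j\<close> have "inner (f i) (f j) = - r\<^sup>2 / real m" by simp
      moreover from I[OF \<open>i \<le> m\<close> \<open>i \<le> m\<close>] have "inner (f i) (f i) = r\<^sup>2" by simp
      ultimately show False using rm ij(3) by metis
    qed
  qed
  define Y where "Y = f ` {..m}"
  have "card Y = n" unfolding Y_def using card_image[OF inj] n2 unfolding m_def by simp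
  moreover have "finite Y" unfolding Y_def by simp
  moreover have "\<forall>y\<in>Y. \<forall>y'\<in>Y. inner y y' = (if y = y' then r\<^sup>2 else - r\<^sup>2 / (real n - 1))"
  proof (intro ballI)
    fix y y' assume "y \<in> Y" "y' \<in> Y"
    then obtain i j where ij: "i \<le> m" "j \<le> m" "y = f i" "y' = f j" unfolding Y_def by auto
    have "y = y' \<longleftrightarrow> i = j" using inj ij unfolding inj_on_def by auto
    then show "inner y y' = (if y = y' then r\<^sup>2 else - r\<^sup>2 / (real n - 1))"
      using I[OF ij(1,2)] ij mn by simp
  qed
  ultimately show ?thesis by blast
qed



theorem theorem1:
  fixes r :: real and n :: nat
  assumes "r > 0" and "2 \<le> n" and "n \<le> DIM('a::euclidean_space) + 1"
  shows "(\<exists>Y::'a set. regular_simplex_vertices n Y \<and> smallest_circumsphere Y r) \<and>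
    (\<forall>Y::'a set. regular_simplex_vertices n Y \<and> smallest_circumsphere Y r \<longrightarrow>
       Y \<subseteq> cball 0 r \<and> card Y = n \<and>
       (\<forall>X::'a set. X \<subseteq> cball 0 r \<and> finite X \<and> card X = n \<longrightarrow> mst_length X \<le> mst_length Y))"
proof (rule conjI)
  obtain Y :: "'a set" where Y: "finite Y" "card Y = n"
    "\<forall>y\<in>Y. \<forall>y'\<in>Y. inner y y' = (if y = y' then r\<^sup>2 else - r\<^sup>2 / (real n - 1))"
    using exists_inner_config[OF assms(2) assms(3) assms(1)] by blast
  show "\<exists>Y::'a set. regular_simplex_vertices n Y \<and> smallest_circumsphere Y r"
    using simplex_from_inner[OF Y(1,2) assms(2,1)] Y(3) by blast
next
  show "\<forall>Y::'a set. regular_simplex_vertices n Y \<and> smallest_circumsphere Y r \<longrightarrow>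
       Y \<subseteq> cball 0 r \<and> card Y = n \<and>
       (\<forall>X::'a set. X \<subseteq> cball 0 r \<and> finite X \<and> card X = n \<longrightarrow> mst_length X \<le> mst_length Y)"
  proof (intro allI impI)
  fix Y :: "'a set"
  assume H: "regular_simplex_vertices n Y \<and> smallest_circumsphere Y r"
  then have fin: "finite Y" and cY: "card Y = n" and sph: "Y \<subseteq> sphere 0 r"
    and small: "\<And>c' \<rho>. Y \<subseteq> sphere c' \<rho> \<Longrightarrow> r \<le> \<rho>"
    unfolding regular_simplex_vertices_def smallest_circumsphere_def by auto
  have "\<exists>c. \<forall>x\<in>Y. \<forall>y\<in>Y. x \<noteq> y \<longrightarrow> dist x y = c"
    using H unfolding regular_simplex_vertices_def by (elim conjE) assumption
  then obtain c where cst0: "\<forall>x\<in>Y. \<forall>y\<in>Y. x \<noteq> y \<longrightarrow> dist x y = c" by (elim exE)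
  have cst: "\<And>x y. x \<in> Y \<Longrightarrow> y \<in> Y \<Longrightarrow> x \<noteq> y \<Longrightarrow> dist x y = c"
    using cst0 by blast
  have cstn: "\<And>x y. x \<in> Y \<Longrightarrow> y \<in> Y \<Longrightarrow> x \<noteq> y \<Longrightarrow> norm (x - y) = c"
    using cst by (metis dist_norm)
  have P1: "Y \<subseteq> cball 0 r" using sph sphere_cball by (rule subset_trans)
  have P3: "\<forall>X::'a set. X \<subseteq> cball 0 r \<and> finite X \<and> card X = n \<longrightarrow> mst_length X \<le> mst_length Y"
  proof (intro allI impI)
    fix X :: "'a set" assume X: "X \<subseteq> cball 0 r \<and> finite X \<and> card X = n"
    have cc: "(real n - 1) * c\<^sup>2 = 2 * real n * r\<^sup>2 \<and> c \<ge> 0"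
      by (rule given_simplex[OF fin cY assms(2) sph cst small])
    have Xne: "X \<noteq> {}" using X assms(2) by auto
    obtain x0 where x0: "x0 \<in> X"
      "(\<Sum>y\<in>X. norm (x0 - y))\<^sup>2 \<le> 2 * real (card X) * (real (card X) - 1) * r\<^sup>2"
      using star_bound[of X r] X Xne by blast
    have bdd: "bdd_below (graph_length ` A)" for A
      by (rule bdd_belowI[of _ 0]) (auto simp: graph_length_nonneg)
    have "mst_length X \<le> graph_length (star x0 X)"
      unfolding mst_length_def
      by (rule cInf_lower[OF _ bdd]) (use star_spanning[OF x0(1)] in blast)
    also have "\<dots> = (\<Sum>y\<in>X. norm (x0 - y))" using star_length X x0(1) by blast
    also have "\<dots> \<le> (real n - 1) * c"
    proof (rule power2_le_imp_le)
      have "(\<Sum>y\<in>X. norm (x0 - y))\<^sup>2 \<le> 2 * real n * (real n - 1) * r\<^sup>2" using x0(2) X by simp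
      also have "\<dots> = (real n - 1) * ((real n - 1) * c\<^sup>2)" using cc by (simp add: algebra_simps)
      also have "\<dots> = ((real n - 1) * c)\<^sup>2" by (simp add: power2_eq_square)
      finally show "(\<Sum>y\<in>X. norm (x0 - y))\<^sup>2 \<le> ((real n - 1) * c)\<^sup>2" .
      show "0 \<le> (real n - 1) * c" using cc assms(2) by simp
    qed
    also have "\<dots> \<le> mst_length Y"
    proof -
      have "Y \<noteq> {}" using cY assms(2) by auto
      then obtain y0 where y0: "y0 \<in> Y" by blast
      have ne: "graph_length ` {T. spanning_tree Y T} \<noteq> {}" using star_spanning[OF y0] by blast
      show ?thesis unfolding mst_length_def
      proof (rule cInf_greatest[OF ne])
        fix L assume "L \<in> graph_length ` {T. spanning_tree Y T}"
        then obtain T where T: "spanning_tree Y T" "L = graph_length T" by blast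
        have "c * (real (card Y) - 1) \<le> graph_length T"
          using tree_lower[OF fin y0 T(1) cstn] .
        then show "(real n - 1) * c \<le> L" using T(2) cY by (simp add: mult.commute)
      qed
    qed
    finally show "mst_length X \<le> mst_length Y" .
  qed
  show "Y \<subseteq> cball 0 r \<and> card Y = n \<and>
       (\<forall>X::'a set. X \<subseteq> cball 0 r \<and> finite X \<and> card X = n \<longrightarrow> mst_length X \<le> mst_length Y)"
    using P1 cY P3 by blast
  qed
qed

end
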